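(* Let $N_1=(V_1,E_1)$ and $N_2=(V_2,E_2)$ be phylogenetic networks on the same set $S$ of taxa. For every $v_1\in V_1$ and $v_2\in V_2$, if $\ell(v_1)=\ell(v_2)$, then $\mu(v_1)=\mu(v_2)$.
   Context: A phylogenetic network on $S=\{1,\dots,n\}$ is a finite rooted directed acyclic graph whose leaves are bijectively labeled by $S$. For a node $v$ and $i\in S$, $m_i(v)$ is the number of distinct directed paths from $v$ to the leaf $i$, and $\mu(v)=(m_1(v),\dots,m_n(v))$. The nested label $\ell(v)$ is defined by induction on height (largest length of a path to a leaf): $\ell(v)=\{i\}$ for the leaf labeled $i$, and otherwise $\ell(v)$ is the multiset of nested labels of the children of $v$. *)

theory Defs
  imports Main "HOL-Library.Multiset"
begin

definition children :: "('a \<times> 'a) set \<Rightarrow> 'a \<Rightarrow> 'a set" where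
  "children E v = {w. (v, w) \<in> E}"

definition leaves :: "'a set \<Rightarrow> ('a \<times> 'a) set \<Rightarrow> 'a set" where
  "leaves V E = {v \<in> V. children E v = {}}"

definition phylo_network :: "nat \<Rightarrow> 'a set \<Rightarrow> ('a \<times> 'a) set \<Rightarrow> ('a \<Rightarrow> nat) \<Rightarrow> bool" where
  "phylo_network n V E lab \<longleftrightarrow>
     finite V \<and> E \<subseteq> V \<times> V \<and> acyclic E \<and>
     (\<exists>r\<in>V. \<forall>v\<in>V. (r, v) \<in> E\<^sup>*) \<and>
     bij_betw lab (leaves V E) {1..n}"

definition is_path :: "('a \<times> 'a) set \<Rightarrow> 'a list \<Rightarrow> bool" where
  "is_path E p \<longleftrightarrow> p \<noteq> [] \<and> (\<forall>k. Suc k < length p \<longrightarrow> (p ! k, p ! Suc k) \<in> E)"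

definition num_paths :: "'a set \<Rightarrow> ('a \<times> 'a) set \<Rightarrow> ('a \<Rightarrow> nat) \<Rightarrow> nat \<Rightarrow> 'a \<Rightarrow> nat" where
  "num_paths V E lab i v =
     card {p. is_path E p \<and> hd p = v \<and> last p \<in> leaves V E \<and> lab (last p) = i}"

definition mu :: "nat \<Rightarrow> 'a set \<Rightarrow> ('a \<times> 'a) set \<Rightarrow> ('a \<Rightarrow> nat) \<Rightarrow> 'a \<Rightarrow> nat list" where
  "mu n V E lab v = map (\<lambda>i. num_paths V E lab i v) [1..<Suc n]"

datatype nlabel = NLeaf nat | NNode "nlabel multiset"

text \<open>Recursion on height, implemented with fuel k; correct whenever k > height v.\<close>
fun nlabel_fuel :: "nat \<Rightarrow> 'a set \<Rightarrow> ('a \<times> 'a) set \<Rightarrow> ('a \<Rightarrow> nat) \<Rightarrow> 'a \<Rightarrow> nlabel" where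
  "nlabel_fuel 0 V E lab v = NLeaf (lab v)"
| "nlabel_fuel (Suc k) V E lab v =
     (if v \<in> leaves V E then NLeaf (lab v)
      else NNode (image_mset (nlabel_fuel k V E lab) (mset_set (children E v))))"

text \<open>Every height is < card V, so fuel card V suffices.\<close>
definition nested_label :: "'a set \<Rightarrow> ('a \<times> 'a) set \<Rightarrow> ('a \<Rightarrow> nat) \<Rightarrow> 'a \<Rightarrow> nlabel" where
  "nested_label V E lab v = nlabel_fuel (card V) V E lab v"

end

theory Submission
  imports Defs
begin

lemma is_path_single: "is_path E [v]"
  by (simp add: is_path_def)

lemma is_path_Cons2: "is_path E (v # a # q) \<longleftrightarrow> (v, a) \<in> E \<and> is_path E (a # q)"
proof
  assume h: "is_path E (v # a # q)"
  have "(v, a) \<in> E" using h unfolding is_path_def by (metis One_nat_def length_Cons lessI nth_Cons_0 nth_Cons_Suc zero_less_Suc Suc_less_eq)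
  moreover have "is_path E (a # q)" unfolding is_path_def
  proof (intro conjI allI impI)
    fix k assume "Suc k < length (a # q)"
    then have "Suc (Suc k) < length (v # a # q)" by simp
    then have "((v#a#q) ! Suc k, (v#a#q) ! Suc (Suc k)) \<in> E" using h unfolding is_path_def by blast
    then show "((a # q) ! k, (a # q) ! Suc k) \<in> E" by simp
  qed simp
  ultimately show "(v, a) \<in> E \<and> is_path E (a # q)" by simp
next
  assume h: "(v, a) \<in> E \<and> is_path E (a # q)"
  show "is_path E (v # a # q)" unfolding is_path_def
  proof (intro conjI allI impI)
    fix k assume k: "Suc k < length (v # a # q)"
    show "((v # a # q) ! k, (v # a # q) ! Suc k) \<in> E"
    proof (cases k)
      case 0 then show ?thesis using h by simp
    next
      case (Suc j)
      then have "Suc j < length (a # q)" using k by simp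
      then have "((a#q) ! j, (a#q) ! Suc j) \<in> E" using h unfolding is_path_def by blast
      then show ?thesis using Suc by simp
    qed
  qed simp
qed

lemma is_path_Cons: "is_path E (v # q) \<longleftrightarrow> (q = [] \<or> ((v, hd q) \<in> E \<and> is_path E q))"
  by (cases q) (auto simp: is_path_single is_path_Cons2)

lemma path_trancl:
  assumes "is_path E p" "a < b" "b < length p"
  shows "(p ! a, p ! b) \<in> E\<^sup>+"
  using assms(2,3)
proof (induction b)
  case 0 then show ?case by simp
next
  case (Suc b)
  have e: "(p ! b, p ! Suc b) \<in> E" using assms(1) Suc.prems unfolding is_path_def by blast
  show ?case
  proof (cases "a = b")
    case True then show ?thesis using e by auto
  next
    case False
    then have "(p ! a, p ! b) \<in> E\<^sup>+" using Suc by simp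
    then show ?thesis using e by (meson trancl.trancl_into_trancl)
  qed
qed

lemma path_distinct:
  assumes "acyclic E" "is_path E p"
  shows "distinct p"
  unfolding distinct_conv_nth
proof (intro allI impI)
  fix i j assume ij: "i < length p" "j < length p" "i \<noteq> j"
  show "p ! i \<noteq> p ! j"
  proof
    assume eq: "p ! i = p ! j"
    have "(p ! (min i j), p ! (max i j)) \<in> E\<^sup>+"
      using path_trancl[OF assms(2)] ij by (simp add: min_def max_def)
    then have "(p ! i, p ! i) \<in> E\<^sup>+" using eq by (cases "i \<le> j") (auto simp: min_def max_def)
    then show False using assms(1) unfolding acyclic_def by blast
  qed
qed

lemma path_set:
  assumes "is_path E p" "E \<subseteq> V \<times> V" "hd p \<in> V"
  shows "set p \<subseteq> V"
proof
  fix x assume "x \<in> set p"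
  then obtain k where k: "k < length p" "p ! k = x" by (auto simp: in_set_conv_nth)
  show "x \<in> V"
  proof (cases k)
    case 0 then show ?thesis using k assms(1,3) by (simp add: hd_conv_nth is_path_def)
  next
    case (Suc j)
    then have "(p ! j, p ! k) \<in> E" using assms(1) k unfolding is_path_def by blast
    then show ?thesis using assms(2) k by auto
  qed
qed

lemma path_length:
  assumes "finite V" "acyclic E" "E \<subseteq> V \<times> V" "is_path E p" "hd p \<in> V"
  shows "length p \<le> card V"
proof -
  have "length p = card (set p)" using path_distinct[OF assms(2,4)] by (simp add: distinct_card)
  also have "\<dots> \<le> card V" using path_set[OF assms(4,3,5)] assms(1) by (simp add: card_mono)
  finally show ?thesis .
qed

definition PS :: "('a \<times> 'a) set \<Rightarrow> 'a set \<Rightarrow> ('a \<Rightarrow> nat) \<Rightarrow> nat \<Rightarrow> 'a \<Rightarrow> 'a list set" where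
  "PS E L lab i v = {p. is_path E p \<and> hd p = v \<and> last p \<in> L \<and> lab (last p) = i}"

lemma num_paths_PS: "num_paths V E lab i v = card (PS E (leaves V E) lab i v)"
  by (simp add: num_paths_def PS_def)

lemma PS_leaf:
  assumes "v \<in> leaves V E"
  shows "PS E (leaves V E) lab i v = (if lab v = i then {[v]} else {})"
proof -
  have "\<And>p. is_path E p \<Longrightarrow> hd p = v \<Longrightarrow> p = [v]"
  proof -
    fix p assume p: "is_path E p" "hd p = v"
    then obtain q where q: "p = v # q" by (cases p) (auto simp: is_path_def)
    show "p = [v]"
    proof (cases q)
      case (Cons a r)
      then have "(v, a) \<in> E" using p q by (simp add: is_path_Cons2)
      then show ?thesis using assms by (auto simp: leaves_def children_def)
    qed (simp add: q)
  qed
  then show ?thesis using assms by (auto simp: PS_def is_path_single) (metis last.simps)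
qed

lemma PS_node:
  assumes "v \<notin> leaves V E"
  shows "PS E (leaves V E) lab i v = (\<Union>c\<in>children E v. (Cons v) ` PS E (leaves V E) lab i c)"
proof
  show "PS E (leaves V E) lab i v \<subseteq> (\<Union>c\<in>children E v. (Cons v) ` PS E (leaves V E) lab i c)"
  proof
    fix p assume p: "p \<in> PS E (leaves V E) lab i v"
    then obtain q where q: "p = v # q" by (cases p) (auto simp: PS_def is_path_def)
    have "q \<noteq> []" using p q assms by (auto simp: PS_def)
    then have "(v, hd q) \<in> E" "is_path E q" using p q by (auto simp: PS_def is_path_Cons)
    then show "p \<in> (\<Union>c\<in>children E v. (Cons v) ` PS E (leaves V E) lab i c)"
      using p q \<open>q \<noteq> []\<close> by (auto simp: PS_def children_def)
  qed
next
  show "(\<Union>c\<in>children E v. (Cons v) ` PS E (leaves V E) lab i c) \<subseteq> PS E (leaves V E) lab i v"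
  proof
    fix p assume "p \<in> (\<Union>c\<in>children E v. (Cons v) ` PS E (leaves V E) lab i c)"
    then obtain c q where "c \<in> children E v" "q \<in> PS E (leaves V E) lab i c" "p = v # q" by blast
    moreover then have "q \<noteq> []" by (auto simp: PS_def is_path_def)
    ultimately show "p \<in> PS E (leaves V E) lab i v"
      by (auto simp: PS_def children_def is_path_Cons)
  qed
qed

function F :: "nat \<Rightarrow> nlabel \<Rightarrow> nat" where
  "F i (NLeaf j) = (if j = i then 1 else 0)"
| "F i (NNode M) = sum_mset (image_mset (\<lambda>z. if z \<in># M then F i z else 0) M)"
  by pat_completeness auto
termination
proof (relation "measure (\<lambda>(i, z). size z)")
  fix i :: nat and M :: "nlabel multiset" and z assume "z \<in># M"
  then obtain N where "M = add_mset z N" by (metis multi_member_split)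
  then show "((i, z), i, NNode M) \<in> measure (\<lambda>(i, z). size z)" by simp
qed auto

lemma F_node[simp]: "F i (NNode M) = sum_mset (image_mset (F i) M)"
  by (simp cong: image_mset_cong)

lemma main:
  assumes "finite V" "E \<subseteq> V \<times> V"
  shows "v \<in> V \<Longrightarrow> (\<forall>p. is_path E p \<and> hd p = v \<longrightarrow> length p \<le> k) \<Longrightarrow>
    num_paths V E lab i v = F i (nlabel_fuel k V E lab v)"
proof (induction k arbitrary: v)
  case 0
  then have "length [v] \<le> 0" using is_path_single by fastforce
  then show ?case by simp
next
  case (Suc k)
  show ?case
  proof (cases "v \<in> leaves V E")
    case True
    then show ?thesis by (simp add: num_paths_PS PS_leaf)
  next
    case False
    have fin: "finite (children E v)"
      using assms by (rule_tac finite_subset[of _ V]) (auto simp: children_def)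
    have cV: "c \<in> V" if "c \<in> children E v" for c using that assms(2) by (auto simp: children_def)
    have bound: "\<forall>p. is_path E p \<and> hd p = c \<longrightarrow> length p \<le> k" if c: "c \<in> children E v" for c
    proof (intro allI impI)
      fix p assume p: "is_path E p \<and> hd p = c"
      then have "p \<noteq> []" by (simp add: is_path_def)
      then have "is_path E (v # p)" using p c by (auto simp: is_path_Cons children_def)
      then have "length (v # p) \<le> Suc k" using Suc.prems by force
      then show "length p \<le> k" by simp
    qed
    have finP: "finite (PS E (leaves V E) lab i c)" if c: "c \<in> children E v" for c
    proof -
      have "PS E (leaves V E) lab i c \<subseteq> {p. set p \<subseteq> V \<and> length p \<le> k}"
        using bound[OF c] path_set[OF _ assms(2)] cV[OF c] by (auto simp: PS_def)
      moreover have "finite {p. set p \<subseteq> V \<and> length p \<le> k}"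
        using finite_lists_length_le[OF assms(1)] by simp
      ultimately show ?thesis by (rule finite_subset)
    qed
    have "num_paths V E lab i v = card (\<Union>c\<in>children E v. (Cons v) ` PS E (leaves V E) lab i c)"
      by (simp add: num_paths_PS PS_node[OF False])
    also have "\<dots> = (\<Sum>c\<in>children E v. card ((Cons v) ` PS E (leaves V E) lab i c))"
    proof (rule card_UN_disjoint[OF fin])
      show "\<forall>c\<in>children E v. finite ((Cons v) ` PS E (leaves V E) lab i c)" using finP by blast
      show "\<forall>c\<in>children E v. \<forall>d\<in>children E v. c \<noteq> d \<longrightarrow>
          (Cons v) ` PS E (leaves V E) lab i c \<inter> (Cons v) ` PS E (leaves V E) lab i d = {}"
        by (auto simp: PS_def)
    qed
    also have "\<dots> = (\<Sum>c\<in>children E v. num_paths V E lab i c)"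
      by (rule sum.cong) (auto simp: num_paths_PS card_image)
    also have "\<dots> = (\<Sum>c\<in>children E v. F i (nlabel_fuel k V E lab c))"
    proof (rule sum.cong)
      fix c assume c: "c \<in> children E v"
      show "num_paths V E lab i c = F i (nlabel_fuel k V E lab c)"
        by (rule Suc.IH[OF cV[OF c] bound[OF c]])
    qed simp
    also have "\<dots> = F i (nlabel_fuel (Suc k) V E lab v)"
      using False fin by (simp only: nlabel_fuel.simps if_False F_node sum_unfold_sum_mset image_mset.compositionality o_def)
    finally show ?thesis .
  qed
qed

lemma mu_F:
  assumes "phylo_network n V E lab" "v \<in> V"
  shows "mu n V E lab v = map (\<lambda>i. F i (nested_label V E lab v)) [1..<Suc n]"
proof -
  have fin: "finite V" and sub: "E \<subseteq> V \<times> V" and ac: "acyclic E"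
    using assms(1) by (auto simp: phylo_network_def)
  have "\<forall>p. is_path E p \<and> hd p = v \<longrightarrow> length p \<le> card V"
    using path_length[OF fin ac sub] assms(2) by auto
  then show ?thesis unfolding mu_def nested_label_def
    using main[OF fin sub assms(2)] by simp
qed

theorem corollary1:
  fixes n :: nat
    and V1 :: "'a set" and E1 :: "('a \<times> 'a) set" and lab1 :: "'a \<Rightarrow> nat"
    and V2 :: "'b set" and E2 :: "('b \<times> 'b) set" and lab2 :: "'b \<Rightarrow> nat"
  assumes "phylo_network n V1 E1 lab1"
    and "phylo_network n V2 E2 lab2"
    and "v1 \<in> V1" and "v2 \<in> V2"
    and "nested_label V1 E1 lab1 v1 = nested_label V2 E2 lab2 v2"
  shows "mu n V1 E1 lab1 v1 = mu n V2 E2 lab2 v2"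
  using mu_F[OF assms(1,3)] mu_F[OF assms(2,4)] assms(5) by simp

end
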